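(* Let $(h_{n,0},\dots,h_{n,n-3})$ be the $h$-vector of the Whitehouse complex $\Delta_n$ ($n\ge 3$), with the convention $h_{m,j}=0$ for $j<0$ or $j>m-3$. Then for all $n\ge 4$ and $0\le k\le n-3$, $$h_{n,k}=(k+1)\,h_{n-1,k}+(2n-k-5)\,h_{n-1,k-1}.$$
   Context: The Whitehouse complex $\Delta_n$ ($n\ge 3$) is the simplicial complex with vertex set $V_n=\{S\subseteq\{2,\dots,n\}: 2\le |S|\le n-2\}$, in which a subset $F\subseteq V_n$ is a face iff for all $S,T\in F$ one has $S\subseteq T$, $T\subseteq S$, or $S\cap T=\emptyset$; it is pure of dimension $n-4$. For a $(d-1)$-dimensional simplicial complex with $f_{j}$ faces of dimension $j$ ($f_{-1}=1$), the $h$-vector $(h_0,\dots,h_d)$ is given by $h_k=\sum_{i=0}^k(-1)^{k-i}\binom{d-i}{k-i}f_{i-1}$. For $\Delta_n$ we have $d=n-3$. *)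

theory Defs
  imports Main
begin

definition wh_vertices :: "nat \<Rightarrow> nat set set" where
  "wh_vertices n = {S. S \<subseteq> {2..n} \<and> 2 \<le> card S \<and> card S \<le> n - 2}"

definition wh_faces :: "nat \<Rightarrow> nat set set set" where
  "wh_faces n = {F. F \<subseteq> wh_vertices n \<and>
      (\<forall>S\<in>F. \<forall>T\<in>F. S \<subseteq> T \<or> T \<subseteq> S \<or> S \<inter> T = {})}"

definition wh_f :: "nat \<Rightarrow> int \<Rightarrow> int" where
  "wh_f n j = int (card {F \<in> wh_faces n. int (card F) = j + 1})"

definition wh_h :: "nat \<Rightarrow> int \<Rightarrow> int" where
  "wh_h n k = (if 0 \<le> k \<and> k \<le> int n - 3 then
     (\<Sum>i\<in>{0..k}. (-1) ^ nat (k - i) * int ((nat (int n - 3 - i)) choose (nat (k - i)))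
                   * wh_f n (i - 1))
   else 0)"

end

theory Submission
  imports Defs
begin


definition VV :: "'a set \<Rightarrow> 'a set set" where
  "VV A = {S. S \<subseteq> A \<and> 2 \<le> card S \<and> S \<noteq> A}"
definition lam :: "'a set set \<Rightarrow> bool" where
  "lam F = (\<forall>S\<in>F. \<forall>T\<in>F. S \<subseteq> T \<or> T \<subseteq> S \<or> S \<inter> T = {})"
definition LL :: "'a set \<Rightarrow> 'a set set set" where
  "LL A = {F. F \<subseteq> VV A \<and> lam F}"

definition fa :: "'a \<Rightarrow> 'a set \<Rightarrow> 'a set \<Rightarrow> 'a set" where
  "fa a X S = (if X \<subseteq> S then insert a S else S)"
definition fb :: "'a \<Rightarrow> 'a set \<Rightarrow> 'a set \<Rightarrow> 'a set" where
  "fb a Y S = (if Y \<subset> S then insert a S else S)"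
definition phi1 where "phi1 a G X = fa a X ` G"
definition phi2 where "phi2 a A G Y = insert (if Y = A then A else insert a Y) (fb a Y ` G)"

lemma ins_ne: assumes "S \<subseteq> A" "S \<noteq> A" "a \<notin> A" shows "insert a S \<noteq> insert a A"
proof
  assume "insert a S = insert a A"
  then have "insert a S - {a} = insert a A - {a}" by simp
  moreover have "insert a S - {a} = S" "insert a A - {a} = A" using assms by auto
  ultimately show False using assms by simp
qed

lemma VV_card: "finite A \<Longrightarrow> S \<in> VV A \<Longrightarrow> 2 \<le> card S \<and> S \<subseteq> A \<and> S \<noteq> A \<and> S \<noteq> {}"
  unfolding VV_def by auto

lemma phi1_L:
  assumes fin: "finite A" and aA: "a \<notin> A" and A2: "2 \<le> card A" and G: "G \<in> LL A" and X: "X \<in> insert A G"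
  shows "phi1 a G X \<in> LL (insert a A) \<and> card (phi1 a G X) = card G"
proof -
  have GV: "G \<subseteq> VV A" and lG: "lam G" using G by (auto simp: LL_def)
  have Xne: "X \<noteq> {}" "X \<subseteq> A" using X GV fin A2 by (auto simp: VV_def)
  have inv: "\<And>S. S \<in> G \<Longrightarrow> fa a X S - {a} = S"
    using GV aA unfolding fa_def VV_def by auto
  have inj: "inj_on (fa a X) G"
    by (rule inj_on_inverseI[where g="\<lambda>U. U - {a}"]) (rule inv)
  have sub: "fa a X ` G \<subseteq> VV (insert a A)"
  proof
    fix U assume "U \<in> fa a X ` G"
    then obtain S where S: "S \<in> G" "U = fa a X S" by auto
    have S2: "S \<subseteq> A" "2 \<le> card S" "S \<noteq> A" using S GV by (auto simp: VV_def)
    have fS: "finite S" using S2 fin finite_subset by blast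
    show "U \<in> VV (insert a A)"
    proof (cases "X \<subseteq> S")
      case True
      have "a \<notin> S" using S2 aA by auto
      then have "card (insert a S) = Suc (card S)" using fS by simp
      moreover have "insert a S \<noteq> insert a A" using S2 aA by (intro ins_ne) auto
      ultimately show ?thesis using S True S2 by (auto simp: VV_def fa_def)
    next
      case False
      then show ?thesis using S S2 aA by (auto simp: VV_def fa_def)
    qed
  qed
  have l: "lam (fa a X ` G)"
    unfolding lam_def
  proof (intro ballI)
    fix U W assume "U \<in> fa a X ` G" "W \<in> fa a X ` G"
    then obtain S T where ST: "S \<in> G" "T \<in> G" "U = fa a X S" "W = fa a X T" by auto
    have "S \<subseteq> A" "T \<subseteq> A" using ST GV by (auto simp: VV_def)
    have "S \<subseteq> T \<or> T \<subseteq> S \<or> S \<inter> T = {}" using lG ST unfolding lam_def by blast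
    then show "U \<subseteq> W \<or> W \<subseteq> U \<or> U \<inter> W = {}"
      using ST Xne aA \<open>S \<subseteq> A\<close> \<open>T \<subseteq> A\<close> unfolding fa_def by (auto split: if_splits)
  qed
  show ?thesis using sub l inj unfolding phi1_def LL_def by (simp add: card_image)
qed


lemma phi2_L:
  assumes fin: "finite A" and aA: "a \<notin> A" and A2: "2 \<le> card A" and G: "G \<in> LL A"
    and Y: "Y \<in> insert A G \<union> (\<lambda>x. {x}) ` A"
  shows "phi2 a A G Y \<in> LL (insert a A) \<and> card (phi2 a A G Y) = Suc (card G)"
proof -
  have GV: "G \<subseteq> VV A" and lG: "lam G" using G by (auto simp: LL_def)
  have Ane: "A \<noteq> {}" using A2 by auto
  have Yne: "Y \<noteq> {}" "Y \<subseteq> A" using Y GV Ane by (auto simp: VV_def)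
  have aY: "a \<notin> Y" using Yne aA by auto
  have Ylam: "\<And>S. S \<in> G \<Longrightarrow> S \<subseteq> Y \<or> Y \<subseteq> S \<or> S \<inter> Y = {}"
  proof -
    fix S assume S: "S \<in> G"
    show "S \<subseteq> Y \<or> Y \<subseteq> S \<or> S \<inter> Y = {}"
    proof (cases "Y \<in> G")
      case True then show ?thesis using lG S unfolding lam_def by blast
    next
      case False
      then have "Y = A \<or> (\<exists>x. Y = {x})" using Y by auto
      then show ?thesis using S GV unfolding VV_def by auto
    qed
  qed
  have inv: "\<And>S. S \<in> G \<Longrightarrow> fb a Y S - {a} = S"
    using GV aA unfolding fb_def VV_def by auto
  have inj: "inj_on (fb a Y) G"
    by (rule inj_on_inverseI[where g="\<lambda>U. U - {a}"]) (rule inv)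
  define N where "N = (if Y = A then A else insert a Y)"
  have NV: "N \<in> VV (insert a A)"
  proof (cases "Y = A")
    case True then show ?thesis using A2 aA by (auto simp: N_def VV_def)
  next
    case False
    have fY: "finite Y" using Yne fin finite_subset by blast
    have "card N = Suc (card Y)" using False fY aY by (simp add: N_def)
    moreover have "card Y \<ge> 1" using fY Yne by (simp add: Suc_leI card_gt_0_iff)
    moreover have "N = insert a Y" using False by (simp add: N_def)
    then have "N \<noteq> insert a A" using False Yne aA ins_ne by metis
    ultimately show ?thesis using Yne unfolding VV_def N_def by auto
  qed
  have Nnot: "N \<notin> fb a Y ` G"
  proof
    assume "N \<in> fb a Y ` G"
    then obtain S where S: "S \<in> G" "N = fb a Y S" by auto
    have "S \<subseteq> A" "S \<noteq> A" using S GV by (auto simp: VV_def)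
    then show False using S aA aY unfolding N_def fb_def by (auto split: if_splits)
  qed
  have sub: "fb a Y ` G \<subseteq> VV (insert a A)"
  proof
    fix U assume "U \<in> fb a Y ` G"
    then obtain S where S: "S \<in> G" "U = fb a Y S" by auto
    have S2: "S \<subseteq> A" "2 \<le> card S" "S \<noteq> A" using S GV by (auto simp: VV_def)
    have fS: "finite S" using S2 fin finite_subset by blast
    show "U \<in> VV (insert a A)"
    proof (cases "Y \<subset> S")
      case True
      have "a \<notin> S" using S2 aA by auto
      then have "card (insert a S) = Suc (card S)" using fS by simp
      moreover have "insert a S \<noteq> insert a A" using S2 aA by (intro ins_ne) auto
      ultimately show ?thesis using S True S2 by (auto simp: VV_def fb_def)
    next
      case False
      then show ?thesis using S S2 aA by (auto simp: VV_def fb_def)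
    qed
  qed
  have l1: "\<And>U W. U \<in> fb a Y ` G \<Longrightarrow> W \<in> fb a Y ` G \<Longrightarrow> U \<subseteq> W \<or> W \<subseteq> U \<or> U \<inter> W = {}"
  proof -
    fix U W assume "U \<in> fb a Y ` G" "W \<in> fb a Y ` G"
    then obtain S T where ST: "S \<in> G" "T \<in> G" "U = fb a Y S" "W = fb a Y T" by auto
    have "S \<subseteq> A" "T \<subseteq> A" using ST GV by (auto simp: VV_def)
    have "S \<subseteq> T \<or> T \<subseteq> S \<or> S \<inter> T = {}" using lG ST unfolding lam_def by blast
    then show "U \<subseteq> W \<or> W \<subseteq> U \<or> U \<inter> W = {}"
      using ST Yne aA \<open>S \<subseteq> A\<close> \<open>T \<subseteq> A\<close> unfolding fb_def by (auto split: if_splits)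
  qed
  have l2: "\<And>U. U \<in> fb a Y ` G \<Longrightarrow> U \<subseteq> N \<or> N \<subseteq> U \<or> U \<inter> N = {}"
  proof -
    fix U assume "U \<in> fb a Y ` G"
    then obtain S where S: "S \<in> G" "U = fb a Y S" by auto
    have "S \<subseteq> A" using S GV by (auto simp: VV_def)
    show "U \<subseteq> N \<or> N \<subseteq> U \<or> U \<inter> N = {}"
    proof (cases "Y \<subset> S")
      case True
      then have "Y \<noteq> A" using \<open>S \<subseteq> A\<close> by auto
      then show ?thesis using True S unfolding N_def fb_def by auto
    next
      case False
      then have U: "U = S" using S unfolding fb_def by auto
      show ?thesis
      proof (cases "Y = A")
        case True then show ?thesis using U \<open>S \<subseteq> A\<close> unfolding N_def by auto
      next
        case YA: False
        have "S \<subseteq> Y \<or> S = Y \<or> S \<inter> Y = {}" using Ylam[OF S(1)] False by auto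
        then show ?thesis using U YA aA \<open>S \<subseteq> A\<close> unfolding N_def by auto
      qed
    qed
  qed
  have lam: "lam (insert N (fb a Y ` G))"
    unfolding lam_def using l1 l2 by blast
  have "G \<subseteq> Pow A" using GV by (auto simp: VV_def)
  then have fG: "finite G" using fin finite_subset by blast
  show ?thesis using sub lam inj NV Nnot fG unfolding phi2_def N_def[symmetric] LL_def
    by (simp add: card_image)
qed


definition rr where "rr a A F = (\<lambda>S. S - {a}) ` F \<inter> VV A"
definition MM where "MM a A F = insert a A \<inter> \<Inter>{S\<in>F. a\<in>S}"
definition psi where "psi a A F = (let G = rr a A F; Y = MM a A F - {a} in
   if Y \<in> F \<or> card Y = 1 then Inr (G,Y) else Inl (G,Y))"

lemma chain_Inter:
  assumes "finite C" "C \<noteq> {}" "\<forall>S\<in>C. \<forall>T\<in>C. S \<subseteq> T \<or> T \<subseteq> S"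
  shows "\<Inter>C \<in> C"
  using assms
proof (induction C rule: finite_ne_induct)
  case (singleton x) then show ?case by simp
next
  case (insert x F)
  then have IH: "\<Inter>F \<in> F" by blast
  then have "x \<subseteq> \<Inter>F \<or> \<Inter>F \<subseteq> x" using insert.prems by blast
  then show ?case using IH by (auto simp: Int_absorb1 Int_absorb2)
qed

lemma psi_phi1:
  assumes fin: "finite A" and aA: "a \<notin> A" and A2: "2 \<le> card A" and G: "G \<in> LL A" and X: "X \<in> insert A G"
  shows "psi a A (phi1 a G X) = Inl (G, X)"
proof -
  have GV: "G \<subseteq> VV A" using G by (auto simp: LL_def)
  have inv: "\<And>S. S \<in> G \<Longrightarrow> fa a X S - {a} = S"
    using GV aA unfolding fa_def VV_def by auto
  have r: "rr a A (phi1 a G X) = G"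
  proof -
    have "(\<lambda>S. S - {a}) ` fa a X ` G = G" using inv by (force simp: image_image)
    then show ?thesis using GV unfolding rr_def phi1_def by auto
  qed
  have Ane: "A \<noteq> {}" using A2 by auto
  have XA: "X \<subseteq> A" "X \<noteq> {}" "2 \<le> card X" using X GV A2 by (auto simp: VV_def)
  have aX: "a \<notin> X" using XA aA by auto
  have M: "MM a A (phi1 a G X) - {a} = X"
  proof (cases "X = A")
    case True
    have "{S \<in> phi1 a G X. a \<in> S} = {}"
      using True GV aA unfolding phi1_def fa_def VV_def by auto
    then show ?thesis using True aA unfolding MM_def by auto
  next
    case False
    then have XG: "X \<in> G" using X by auto
    have "insert a X \<in> {S \<in> phi1 a G X. a \<in> S}" using XG unfolding phi1_def fa_def by force
    moreover have "\<forall>S \<in> {S \<in> phi1 a G X. a \<in> S}. insert a X \<subseteq> S"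
      using GV aA unfolding phi1_def fa_def VV_def by auto
    ultimately have "\<Inter>{S \<in> phi1 a G X. a \<in> S} = insert a X" by blast
    then show ?thesis using XA aX unfolding MM_def by auto
  qed
  have nF: "X \<notin> phi1 a G X"
  proof
    assume "X \<in> phi1 a G X"
    then obtain S where S: "S \<in> G" "X = fa a X S" unfolding phi1_def by auto
    have "S \<noteq> A" using S GV by (auto simp: VV_def)
    show False using S aX \<open>S \<noteq> A\<close> unfolding fa_def by (auto split: if_splits)
  qed
  show ?thesis using r M nF XA unfolding psi_def Let_def by auto
qed

lemma psi_phi2:
  assumes fin: "finite A" and aA: "a \<notin> A" and A2: "2 \<le> card A" and G: "G \<in> LL A"
    and Y: "Y \<in> insert A G \<union> (\<lambda>x. {x}) ` A"
  shows "psi a A (phi2 a A G Y) = Inr (G, Y)"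
proof -
  have GV: "G \<subseteq> VV A" using G by (auto simp: LL_def)
  have Ane: "A \<noteq> {}" using A2 by auto
  have Yne: "Y \<noteq> {}" "Y \<subseteq> A" using Y GV Ane by (auto simp: VV_def)
  have aY: "a \<notin> Y" using Yne aA by auto
  have inv: "\<And>S. S \<in> G \<Longrightarrow> fb a Y S - {a} = S"
    using GV aA unfolding fb_def VV_def by auto
  define N where "N = (if Y = A then A else insert a Y)"
  have NY: "N - {a} = Y" using aA aY by (auto simp: N_def)
  have YG: "Y \<in> VV A \<Longrightarrow> Y \<in> G"
    using Y by (auto simp: VV_def)
  have r: "rr a A (phi2 a A G Y) = G"
  proof -
    have "(\<lambda>S. S - {a}) ` fb a Y ` G = G" using inv by (force simp: image_image)
    then have "(\<lambda>S. S - {a}) ` phi2 a A G Y = insert Y G"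
      using NY unfolding phi2_def N_def[symmetric] by simp
    then show ?thesis using GV YG unfolding rr_def by auto
  qed
  have M: "MM a A (phi2 a A G Y) - {a} = Y"
  proof (cases "Y = A")
    case True
    have "{S \<in> phi2 a A G Y. a \<in> S} = {}"
      using True GV aA unfolding phi2_def fb_def VV_def by auto
    then show ?thesis using True aA unfolding MM_def by auto
  next
    case False
    have "insert a Y \<in> {S \<in> phi2 a A G Y. a \<in> S}" using False unfolding phi2_def by simp
    moreover have "\<forall>S \<in> {S \<in> phi2 a A G Y. a \<in> S}. insert a Y \<subseteq> S"
      using GV aA False unfolding phi2_def fb_def VV_def by auto
    ultimately have "\<Inter>{S \<in> phi2 a A G Y. a \<in> S} = insert a Y" by blast
    then show ?thesis using Yne aY unfolding MM_def by auto
  qed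
  have c: "Y \<in> phi2 a A G Y \<or> card Y = 1"
  proof (cases "Y \<in> G")
    case True
    then have "fb a Y Y = Y" unfolding fb_def by auto
    then show ?thesis using True unfolding phi2_def by force
  next
    case False
    then have "Y = A \<or> (\<exists>x. Y = {x})" using Y by auto
    then show ?thesis unfolding phi2_def by auto
  qed
  show ?thesis using r M c unfolding psi_def Let_def by auto
qed


lemma psi_cases:
  assumes fin: "finite A" and aA: "a \<notin> A" and A2: "2 \<le> card A" and F: "F \<in> LL (insert a A)"
  shows "(\<exists>G X. psi a A F = Inl (G,X) \<and> G \<in> LL A \<and> X \<in> insert A G \<and> phi1 a G X = F) \<or>
         (\<exists>G Y. psi a A F = Inr (G,Y) \<and> G \<in> LL A \<and> Y \<in> insert A G \<union> (\<lambda>x. {x}) ` A \<and> phi2 a A G Y = F)"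
proof -
  define A' where "A' = insert a A"
  have FV: "F \<subseteq> VV A'" and lF: "lam F" using F by (auto simp: LL_def A'_def)
  have finA': "finite A'" using fin by (simp add: A'_def)
  have FVs: "\<And>S. S \<in> F \<Longrightarrow> S \<subseteq> A' \<and> 2 \<le> card S \<and> S \<noteq> A'" using FV by (auto simp: VV_def)
  have lamF: "\<And>S T. S \<in> F \<Longrightarrow> T \<in> F \<Longrightarrow> S \<subseteq> T \<or> T \<subseteq> S \<or> S \<inter> T = {}"
    using lF unfolding lam_def by blast
  have "F \<subseteq> Pow A'" using FVs by auto
  then have fF: "finite F" using finA' finite_subset by blast
  define G where "G = rr a A F"
  define C where "C = {S\<in>F. a\<in>S}"
  define M where "M = MM a A F"
  define Y where "Y = M - {a}"
  have psi_eq: "psi a A F = (if Y \<in> F \<or> card Y = 1 then Inr (G,Y) else Inl (G,Y))"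
    unfolding psi_def Let_def G_def Y_def M_def by simp
  have GLL: "G \<in> LL A"
  proof -
    have "lam G"
      unfolding lam_def
    proof (intro ballI)
      fix U W assume "U \<in> G" "W \<in> G"
      then obtain S T where ST: "S \<in> F" "T \<in> F" "U = S - {a}" "W = T - {a}" unfolding G_def rr_def by auto
      show "U \<subseteq> W \<or> W \<subseteq> U \<or> U \<inter> W = {}" using lamF[OF ST(1,2)] ST(3,4) by blast
    qed
    then show ?thesis unfolding LL_def G_def rr_def by auto
  qed
  have K1: "\<And>S. S \<in> F \<Longrightarrow> a \<in> S \<Longrightarrow> M \<subseteq> S" unfolding M_def MM_def by auto
  have K2: "C \<noteq> {} \<Longrightarrow> M \<in> F \<and> a \<in> M"
  proof -
    assume Cne: "C \<noteq> {}"
    have "finite C" using fF unfolding C_def by auto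
    moreover have "\<forall>S\<in>C. \<forall>T\<in>C. S \<subseteq> T \<or> T \<subseteq> S" using lamF unfolding C_def by blast
    ultimately have IC: "\<Inter>C \<in> C" using chain_Inter Cne by blast
    then have "\<Inter>C \<subseteq> A'" using FVs unfolding C_def by auto
    then have "M = \<Inter>C" unfolding M_def MM_def C_def A'_def by auto
    then show ?thesis using IC unfolding C_def by auto
  qed
  have K3: "C = {} \<Longrightarrow> M = A'" unfolding M_def MM_def C_def A'_def by auto
  have YA: "Y \<subseteq> A" unfolding Y_def M_def MM_def by auto
  have aY: "a \<notin> Y" unfolding Y_def by auto
  have Yne: "Y \<noteq> {}"
  proof (cases "C = {}")
    case True then show ?thesis using K3 A2 aA unfolding Y_def A'_def by auto
  next
    case False
    then have "M \<in> F" by (simp add: K2)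
    then have "2 \<le> card M" using FVs by auto
    show ?thesis
    proof
      assume "Y = {}"
      then have "M \<subseteq> {a}" unfolding Y_def by auto
      then have "card M \<le> card {a}" by (intro card_mono) auto
      then show False using \<open>2 \<le> card M\<close> by simp
    qed
  qed
  have fY: "finite Y" using YA fin finite_subset by blast
  have K4: "\<And>S. S \<in> F \<Longrightarrow> a \<notin> S \<Longrightarrow> S \<subseteq> Y \<or> S \<inter> Y = {}"
  proof -
    fix S assume S: "S \<in> F" "a \<notin> S"
    show "S \<subseteq> Y \<or> S \<inter> Y = {}"
    proof (cases "C = {}")
      case True then show ?thesis using K3 FVs S unfolding Y_def A'_def by auto
    next
      case False
      then have "M \<in> F" "a \<in> M" using K2 by auto
      then show ?thesis using lamF[OF S(1) \<open>M \<in> F\<close>] S(2) unfolding Y_def by blast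
    qed
  qed
  have MY: "C \<noteq> {} \<Longrightarrow> M = insert a Y \<and> Y \<noteq> A"
  proof -
    assume "C \<noteq> {}"
    then have "M \<in> F" "a \<in> M" using K2 by auto
    then have "M \<noteq> A'" using FVs by auto
    then show ?thesis using \<open>a \<in> M\<close> unfolding Y_def A'_def by auto
  qed
  have aS: "\<And>S. S \<in> F \<Longrightarrow> a \<notin> S \<Longrightarrow> S \<subseteq> A" using FVs unfolding A'_def by auto
  have aS2: "\<And>S. S \<in> F \<Longrightarrow> a \<in> S \<Longrightarrow> S - {a} \<subseteq> A \<and> S - {a} \<noteq> A \<and> S = insert a (S - {a})"
    using FVs unfolding A'_def by auto
  show ?thesis
  proof (cases "Y \<in> F \<or> card Y = 1")
    case False
    have "card Y \<noteq> 0" using fY Yne by simp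
    then have Y2: "2 \<le> card Y" using False by linarith
    have YG: "Y \<in> insert A G"
    proof (cases "C = {}")
      case True then show ?thesis using K3 unfolding Y_def A'_def using aA by auto
    next
      case Cne: False
      then have "M \<in> F" "M = insert a Y" "Y \<noteq> A" using K2 MY by auto
      moreover have "Y \<in> VV A" using YA Y2 \<open>Y \<noteq> A\<close> by (auto simp: VV_def)
      moreover have "Y \<in> (\<lambda>S. S - {a}) ` F"
        by (rule image_eqI[of _ _ M]) (simp_all add: Y_def \<open>M \<in> F\<close>)
      ultimately show ?thesis unfolding G_def rr_def by auto
    qed
    have notYS: "\<not> Y \<subseteq> S" if S: "S \<in> F" "a \<notin> S" for S
    proof
      assume YS: "Y \<subseteq> S"
      from K4[OF S] show False
      proof
        assume "S \<subseteq> Y"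
        then have "S = Y" using YS by (rule subset_antisym)
        then show False using S False by simp
      next
        assume "S \<inter> Y = {}"
        then show False using YS Yne by auto
      qed
    qed
    have eq: "fa a Y ` G = F"
    proof
      show "fa a Y ` G \<subseteq> F"
      proof
        fix U assume "U \<in> fa a Y ` G"
        then obtain T S where TS: "S \<in> F" "T = S - {a}" "U = fa a Y T" unfolding G_def rr_def by auto
        show "U \<in> F"
        proof (cases "a \<in> S")
          case True
          then have "Y \<subseteq> T" using K1 TS unfolding Y_def by auto
          then show ?thesis using TS True unfolding fa_def by (auto simp: insert_absorb)
        next
          case False
          then show ?thesis using TS notYS unfolding fa_def by auto
        qed
      qed
    next
      show "F \<subseteq> fa a Y ` G"
      proof
        fix S assume S: "S \<in> F"
        show "S \<in> fa a Y ` G"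
        proof (cases "a \<in> S")
          case True
          define T where "T = S - {a}"
          have YT: "Y \<subseteq> T" using K1 S True unfolding Y_def T_def by auto
          have "card Y \<le> card T" using YT aS2[OF S True] fin unfolding T_def
            by (meson card_mono finite_subset)
          then have "T \<in> VV A" using aS2[OF S True] Y2 unfolding T_def VV_def by auto
          then have "T \<in> G" unfolding G_def rr_def T_def using S by auto
          moreover have "fa a Y T = S" using YT aS2[OF S True] unfolding fa_def T_def by auto
          ultimately show ?thesis by force
        next
          case False
          have "S \<noteq> A"
          proof
            assume "S = A"
            then have "A \<subseteq> Y \<or> A \<inter> Y = {}" using K4 S False by blast
            then have "Y = A" using YA Yne by auto
            then show False using \<open>S = A\<close> S \<open>\<not> (Y \<in> F \<or> card Y = 1)\<close> by auto
          qed
          then have "S \<in> VV A" using aS[OF S False] FVs[OF S] by (auto simp: VV_def)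
          then have "S \<in> G" unfolding G_def rr_def using S False by force
          moreover have "fa a Y S = S" using notYS S False unfolding fa_def by auto
          ultimately show ?thesis by force
        qed
      qed
    qed
    show ?thesis using psi_eq False GLL YG eq unfolding phi1_def by auto
  next
    case True
    have YG: "Y \<in> insert A G \<union> (\<lambda>x. {x}) ` A"
    proof (cases "card Y = 1")
      case True then show ?thesis using YA by (auto simp: card_Suc_eq)
    next
      case False
      then have "Y \<in> F" using \<open>Y \<in> F \<or> card Y = 1\<close> by auto
      then have "Y = A \<or> Y \<in> VV A" using FVs YA unfolding VV_def by auto
      moreover have "Y - {a} = Y" unfolding Y_def by auto
      ultimately show ?thesis unfolding G_def rr_def using \<open>Y \<in> F\<close> by force
    qed
    define N where "N = (if Y = A then A else insert a Y)"
    have NF: "N \<in> F"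
    proof (cases "C = {}")
      case True
      then have "Y = A" using K3 aA unfolding Y_def A'_def by auto
      then have "card Y \<noteq> 1" using A2 by auto
      then show ?thesis using \<open>Y \<in> F \<or> card Y = 1\<close> \<open>Y = A\<close> unfolding N_def by auto
    next
      case False
      then show ?thesis using K2 MY unfolding N_def by auto
    qed
    have notYS: "\<not> Y \<subset> S" if S: "S \<in> F" "a \<notin> S" for S
      using K4[OF S] Yne by auto
    have eq: "insert N (fb a Y ` G) = F"
    proof
      show "insert N (fb a Y ` G) \<subseteq> F"
      proof
        fix U assume "U \<in> insert N (fb a Y ` G)"
        then consider "U = N" | "U \<in> fb a Y ` G" by blast
        then show "U \<in> F"
        proof cases
          case 1 then show ?thesis using NF by simp
        next
          case 2
          then obtain T S where TS: "S \<in> F" "T = S - {a}" "U = fb a Y T" "T \<in> VV A" unfolding G_def rr_def by auto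
          show ?thesis
          proof (cases "a \<in> S")
            case aS: True
            then have "M \<subseteq> S" using K1 TS by auto
            show ?thesis
            proof (cases "S = M")
              case True
              then have "T = Y" using TS unfolding Y_def by simp
              then have "card Y \<noteq> 1" using TS(4) unfolding VV_def by auto
              then have "Y \<in> F" using \<open>Y \<in> F \<or> card Y = 1\<close> by auto
              then show ?thesis using TS \<open>T = Y\<close> unfolding fb_def by auto
            next
              case False
              have "C \<noteq> {}" using TS aS unfolding C_def by auto
              then have "M = insert a Y" using MY by auto
              then have "Y \<subset> T" using \<open>M \<subseteq> S\<close> False TS aS aY by auto
              then show ?thesis using TS aS unfolding fb_def by (auto simp: insert_absorb)
            qed
          next
            case False
            then show ?thesis using TS notYS unfolding fb_def by auto
          qed
        qed
      qed
    next
      show "F \<subseteq> insert N (fb a Y ` G)"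
      proof
        fix S assume S: "S \<in> F"
        show "S \<in> insert N (fb a Y ` G)"
        proof (cases "a \<in> S")
          case True
          have Cne: "C \<noteq> {}" using S True unfolding C_def by auto
          then have MYs: "M = insert a Y" "Y \<noteq> A" using MY by auto
          show ?thesis
          proof (cases "S = M")
            case True then show ?thesis using MYs unfolding N_def by auto
          next
            case False
            define T where "T = S - {a}"
            have "M \<subseteq> S" using K1 S True by auto
            then have YT: "Y \<subset> T" using False MYs aS2[OF S True] aY unfolding T_def by auto
            then have "card Y < card T" using aS2[OF S True] fin unfolding T_def
              by (meson psubset_card_mono finite_subset)
            moreover have "card Y \<ge> 1" using fY Yne by (simp add: Suc_leI card_gt_0_iff)
            ultimately have "T \<in> VV A" using aS2[OF S True] unfolding T_def VV_def by auto
            then have "T \<in> G" unfolding G_def rr_def T_def using S by auto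
            moreover have "fb a Y T = S" using YT aS2[OF S True] unfolding fb_def T_def by auto
            ultimately show ?thesis by force
          qed
        next
          case False
          show ?thesis
          proof (cases "S = A")
            case True
            then have "A \<subseteq> Y \<or> A \<inter> Y = {}" using K4 S False by blast
            then have "Y = A" using YA Yne by auto
            then show ?thesis using True unfolding N_def by auto
          next
            case SA: False
            then have "S \<in> VV A" using aS[OF S False] FVs[OF S] by (auto simp: VV_def)
            then have "S \<in> G" unfolding G_def rr_def using S False by force
            moreover have "fb a Y S = S" using notYS S False unfolding fb_def by auto
            ultimately show ?thesis by force
          qed
        qed
      qed
    qed
    show ?thesis using psi_eq True GLL YG eq unfolding phi2_def N_def by auto
  qed
qed


lemma finite_LL: "finite A \<Longrightarrow> finite (LL A)"
proof -
  assume fin: "finite A"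
  have "LL A \<subseteq> Pow (Pow A)" unfolding LL_def VV_def by auto
  then show ?thesis using fin finite_subset by blast
qed

lemma finite_LL_mem: "finite A \<Longrightarrow> G \<in> LL A \<Longrightarrow> finite G"
proof -
  assume fin: "finite A" and G: "G \<in> LL A"
  have "G \<subseteq> Pow A" using G unfolding LL_def VV_def by auto
  then show ?thesis using fin finite_subset by blast
qed

lemma card_step:
  assumes fin: "finite A" and aA: "a \<notin> A" and A2: "2 \<le> card A"
  shows "card {F \<in> LL (insert a A). card F = i} =
     (i+1) * card {G \<in> LL A. card G = i} + (i + card A) * card {G \<in> LL A. card G + 1 = i}"
proof -
  define D1 where "D1 = (SIGMA G:{G \<in> LL A. card G = i}. insert A G)"
  define D2 where "D2 = (SIGMA G:{G \<in> LL A. card G + 1 = i}. insert A G \<union> (\<lambda>x. {x}) ` A)"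
  define T where "T = {F \<in> LL (insert a A). card F = i}"
  define ph where "ph = case_sum (\<lambda>(G,X). phi1 a G X) (\<lambda>(G,Y). phi2 a A G Y)"
  have bij: "bij_betw ph (D1 <+> D2) T"
  proof (rule bij_betw_byWitness[where f'="psi a A"])
    show "\<forall>x\<in>D1 <+> D2. psi a A (ph x) = x"
      using psi_phi1[OF fin aA A2] psi_phi2[OF fin aA A2] unfolding D1_def D2_def ph_def by auto
    show "\<forall>F\<in>T. ph (psi a A F) = F"
    proof
      fix F assume "F \<in> T"
      then have "F \<in> LL (insert a A)" unfolding T_def by auto
      from psi_cases[OF fin aA A2 this] show "ph (psi a A F) = F" unfolding ph_def by auto
    qed
    show "ph ` (D1 <+> D2) \<subseteq> T"
      using phi1_L[OF fin aA A2] phi2_L[OF fin aA A2] unfolding D1_def D2_def ph_def T_def by auto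
    show "psi a A ` T \<subseteq> D1 <+> D2"
    proof
      fix x assume "x \<in> psi a A ` T"
      then obtain F where F: "F \<in> LL (insert a A)" "card F = i" "x = psi a A F" unfolding T_def by auto
      from psi_cases[OF fin aA A2 F(1)] show "x \<in> D1 <+> D2"
      proof
        assume "\<exists>G X. psi a A F = Inl (G,X) \<and> G \<in> LL A \<and> X \<in> insert A G \<and> phi1 a G X = F"
        then obtain G X where GX: "psi a A F = Inl (G,X)" "G \<in> LL A" "X \<in> insert A G" "phi1 a G X = F" by blast
        have "card G = i" using phi1_L[OF fin aA A2 GX(2,3)] GX(4) F(2) by simp
        then show ?thesis using GX F(3) unfolding D1_def by auto
      next
        assume "\<exists>G Y. psi a A F = Inr (G,Y) \<and> G \<in> LL A \<and> Y \<in> insert A G \<union> (\<lambda>x. {x}) ` A \<and> phi2 a A G Y = F"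
        then obtain G Y where GY: "psi a A F = Inr (G,Y)" "G \<in> LL A" "Y \<in> insert A G \<union> (\<lambda>x. {x}) ` A" "phi2 a A G Y = F" by blast
        have "card G + 1 = i" using phi2_L[OF fin aA A2 GY(2,3)] GY(4) F(2) by simp
        then show ?thesis using GY F(3) unfolding D2_def by auto
      qed
    qed
  qed
  have AnG: "\<And>G. G \<in> LL A \<Longrightarrow> A \<notin> G" unfolding LL_def VV_def by auto
  have c1: "\<And>G. G \<in> LL A \<Longrightarrow> card (insert A G) = card G + 1"
    using AnG finite_LL_mem[OF fin] by simp
  have c2: "card (insert A G \<union> (\<lambda>x. {x}) ` A) = card G + 1 + card A" if G: "G \<in> LL A" for G
  proof -
    have disj: "insert A G \<inter> (\<lambda>x. {x}) ` A = {}"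
      using G A2 unfolding LL_def VV_def by auto
    have "card ((\<lambda>x. {x}) ` A) = card A" by (simp add: card_image)
    moreover have "card (insert A G \<union> (\<lambda>x. {x}) ` A) = card (insert A G) + card ((\<lambda>x. {x}) ` A)"
      by (rule card_Un_disjoint) (use disj finite_LL_mem[OF fin G] fin in auto)
    ultimately show ?thesis using c1[OF G] by simp
  qed
  have fin1: "finite D1" unfolding D1_def using finite_LL[OF fin] finite_LL_mem[OF fin] by auto
  have fin2: "finite D2" unfolding D2_def using finite_LL[OF fin] finite_LL_mem[OF fin] fin by auto
  have "card D1 = (\<Sum>G\<in>{G \<in> LL A. card G = i}. card (insert A G))"
    unfolding D1_def using finite_LL[OF fin] finite_LL_mem[OF fin] by simp
  also have "\<dots> = (\<Sum>G\<in>{G \<in> LL A. card G = i}. i + 1)" by (rule sum.cong) (auto simp: c1)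
  finally have C1: "card D1 = (i+1) * card {G \<in> LL A. card G = i}" by simp
  have "card D2 = (\<Sum>G\<in>{G \<in> LL A. card G + 1 = i}. card (insert A G \<union> (\<lambda>x. {x}) ` A))"
    unfolding D2_def using finite_LL[OF fin] finite_LL_mem[OF fin] fin by simp
  also have "\<dots> = (\<Sum>G\<in>{G \<in> LL A. card G + 1 = i}. i + card A)" 
  proof (rule sum.cong[OF refl])
    fix G assume "G \<in> {G \<in> LL A. card G + 1 = i}"
    then show "card (insert A G \<union> (\<lambda>x. {x}) ` A) = i + card A" using c2[of G] by auto
  qed
  finally have C2: "card D2 = (i + card A) * card {G \<in> LL A. card G + 1 = i}" by simp
  have "card T = card (D1 <+> D2)" using bij by (simp add: bij_betw_same_card)
  also have "\<dots> = card D1 + card D2" using fin1 fin2 by (simp add: card_Plus)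
  finally show ?thesis using C1 C2 unfolding T_def by simp
qed




lemma absorb_key: "Suc r * (a choose Suc r) = (a - r) * (a choose r)"
  by (metis binomial_absorption binomial_absorb_comp)

lemma key:
  fixes a r j :: nat
  shows "int (j+1) * int (Suc a choose Suc r) - int (a+3+2*j) * int (a choose r)
       = int (r+j+2) * int (a choose Suc r) - (int (2*a+2+j) - int r) * int (a choose r)"
proof -
  have Q: "(int r + 1) * int (a choose Suc r) = (int a - int r) * int (a choose r)"
  proof (cases "r \<le> a")
    case True
    have "int (Suc r * (a choose Suc r)) = int ((a - r) * (a choose r))" using absorb_key by metis
    then show ?thesis using True by (simp add: of_nat_diff algebra_simps)
  next
    case False
    then show ?thesis by (simp add: binomial_eq_0)
  qed
  show ?thesis using Q by (simp add: algebra_simps)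
qed


lemma termeq:
  fixes c :: "nat \<Rightarrow> int"
  assumes "j \<le> k" "k \<le> D"
  shows "(-1)^(Suc k - j) * int ((Suc D - j) choose (Suc k - j)) * (int (j+1) * c j)
       + (-1)^(k-j) * int ((D-j) choose (k-j)) * (int (D+3+j) * c j)
     = int (k+2) * ((-1)^(Suc k - j) * int ((D-j) choose (Suc k - j)) * c j)
       + int (2*D+2-k) * ((-1)^(k-j) * int ((D-j) choose (k-j)) * c j)"
proof -
  define a where "a = D - j"
  define r where "r = k - j"
  have e: "Suc k - j = Suc r" "Suc D - j = Suc a" "k - j = r" "D - j = a"
      "int (k+2) = int (r+j+2)" "int (D+3+j) = int (a+3+2*j)"
      "int (2*D+2-k) = int (2*a+2+j) - int r"
    using assms unfolding a_def r_def by auto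
  have K: "int (j+1) * int (Suc a choose Suc r) - int (a+3+2*j) * int (a choose r)
       = int (r+j+2) * int (a choose Suc r) - (int (2*a+2+j) - int r) * int (a choose r)"
    by (rule key)
  show ?thesis unfolding e
  proof -
    define x where "x = (-1::int)^r * c j"
    have "(-1::int)^(Suc r) * int (Suc a choose Suc r) * (int (j+1) * c j)
       + (-1)^r * int (a choose r) * (int (a+3+2*j) * c j)
       = - x * (int (j+1) * int (Suc a choose Suc r) - int (a+3+2*j) * int (a choose r))"
      unfolding x_def by (simp add: algebra_simps)
    also have "\<dots> = - x * (int (r+j+2) * int (a choose Suc r) - (int (2*a+2+j) - int r) * int (a choose r))"
      using K by simp
    also have "\<dots> = int (r+j+2) * ((-1)^(Suc r) * int (a choose Suc r) * c j)
       + (int (2*a+2+j) - int r) * ((-1)^r * int (a choose r) * c j)"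
      unfolding x_def by (simp add: algebra_simps)
    finally show "(-1::int)^(Suc r) * int (Suc a choose Suc r) * (int (j+1) * c j)
       + (-1)^r * int (a choose r) * (int (a+3+2*j) * c j)
     = int (r+j+2) * ((-1)^(Suc r) * int (a choose Suc r) * c j)
       + (int (2*a+2+j) - int r) * ((-1)^r * int (a choose r) * c j)" .
  qed
qed

definition Hs :: "nat \<Rightarrow> (nat \<Rightarrow> int) \<Rightarrow> nat \<Rightarrow> int" where
  "Hs d c K = (\<Sum>j\<le>K. (-1)^(K-j) * int ((d-j) choose (K-j)) * c j)"

lemma Hs_rec:
  fixes c e :: "nat \<Rightarrow> int"
  assumes kD: "k \<le> D"
    and e: "\<And>j. e j = int (j+1) * c j + (if j = 0 then 0 else int (D+2+j) * c (j-1))"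
  shows "Hs (Suc D) e (Suc k) = int (k+2) * Hs D c (Suc k) + int (2*D+2-k) * Hs D c k"
proof -
  define t1 where "t1 j = (-1)^(Suc k - j) * int ((Suc D - j) choose (Suc k - j)) * (int (j+1) * c j)" for j
  define t2 where "t2 j = (-1)^(Suc k - j) * int ((Suc D - j) choose (Suc k - j)) * (if j = 0 then 0 else int (D+2+j) * c (j-1))" for j
  define u where "u j = (-1)^(Suc k - j) * int ((D - j) choose (Suc k - j)) * c j" for j
  define v where "v j = (-1)^(k - j) * int ((D - j) choose (k - j)) * c j" for j
  have "Hs (Suc D) e (Suc k) = (\<Sum>j\<le>Suc k. t1 j + t2 j)"
    unfolding Hs_def t1_def t2_def e by (simp add: algebra_simps)
  also have "\<dots> = (\<Sum>j\<le>Suc k. t1 j) + (\<Sum>j\<le>Suc k. t2 j)" by (rule sum.distrib)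
  also have "(\<Sum>j\<le>Suc k. t1 j) = (\<Sum>j\<le>k. t1 j) + int (k+2) * c (Suc k)"
    using kD by (simp add: t1_def)
  also have "(\<Sum>j\<le>Suc k. t2 j) = (\<Sum>j\<le>k. t2 (Suc j))"
    unfolding sum.atMost_Suc_shift by (simp add: t2_def)
  also have "(\<Sum>j\<le>k. t2 (Suc j)) = (\<Sum>j\<le>k. (-1)^(k-j) * int ((D-j) choose (k-j)) * (int (D+3+j) * c j))"
    by (rule sum.cong) (auto simp: t2_def)
  finally have L: "Hs (Suc D) e (Suc k) = (\<Sum>j\<le>k. t1 j + (-1)^(k-j) * int ((D-j) choose (k-j)) * (int (D+3+j) * c j)) + int (k+2) * c (Suc k)"
    by (simp add: sum.distrib)
  have R1: "Hs D c (Suc k) = (\<Sum>j\<le>k. u j) + c (Suc k)"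
    unfolding Hs_def u_def by simp
  have R2: "Hs D c k = (\<Sum>j\<le>k. v j)"
    unfolding Hs_def v_def by simp
  have M: "(\<Sum>j\<le>k. t1 j + (-1)^(k-j) * int ((D-j) choose (k-j)) * (int (D+3+j) * c j))
      = (\<Sum>j\<le>k. int (k+2) * u j + int (2*D+2-k) * v j)"
  proof (rule sum.cong[OF refl])
    fix j assume "j \<in> {..k}"
    then have "j \<le> k" by simp
    show "t1 j + (-1)^(k-j) * int ((D-j) choose (k-j)) * (int (D+3+j) * c j) = int (k+2) * u j + int (2*D+2-k) * v j"
      unfolding t1_def u_def v_def using termeq[OF \<open>j \<le> k\<close> kD, of c] by simp
  qed
  have S: "(\<Sum>j\<le>k. int (k+2) * u j + int (2*D+2-k) * v j) = int (k+2) * (\<Sum>j\<le>k. u j) + int (2*D+2-k) * (\<Sum>j\<le>k. v j)"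
    by (simp add: sum.distrib sum_distrib_left)
  show ?thesis by (simp only: L R1 R2 M S) (simp add: algebra_simps)
qed


definition gg :: "nat \<Rightarrow> nat \<Rightarrow> nat" where
  "gg n i = card {F \<in> LL {2..n}. card F = i}"

lemma vert_eq: assumes "n \<ge> 2" shows "wh_vertices n = VV {2..n}"
proof -
  have c: "card {2..n} = n - 1" by simp
  have "S \<subseteq> {2..n} \<Longrightarrow> (card S \<le> n - 2) = (S \<noteq> {2..n})" for S
  proof
    assume "S \<subseteq> {2..n}" "card S \<le> n - 2"
    then show "S \<noteq> {2..n}" using c assms by auto
  next
    assume S: "S \<subseteq> {2..n}" "S \<noteq> {2..n}"
    then have "S \<subset> {2..n}" by auto
    then have "card S < card {2..n}" by (rule psubset_card_mono[rotated]) simp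
    then show "card S \<le> n - 2" using c by simp
  qed
  then show ?thesis unfolding wh_vertices_def VV_def by blast
qed

lemma faces_eq: assumes "n \<ge> 2" shows "wh_faces n = LL {2..n}"
  unfolding wh_faces_def LL_def lam_def vert_eq[OF assms] by simp

lemma wh_f_gg: assumes "n \<ge> 2" shows "wh_f n (int i - 1) = int (gg n i)"
  unfolding wh_f_def gg_def faces_eq[OF assms] by simp

lemma gg_rec:
  assumes n4: "n \<ge> 4"
  shows "int (gg n i) = int (i+1) * int (gg (n-1) i) + (if i = 0 then 0 else int ((n-4)+2+i) * int (gg (n-1) (i-1)))"
proof -
  define A where "A = {2..n-1}"
  have fin: "finite A" and nA: "n \<notin> A" and A2: "2 \<le> card A" using n4 by (auto simp: A_def)
  have ins: "insert n A = {2..n}" using n4 unfolding A_def by auto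
  have cA: "card A = n - 2" unfolding A_def by simp
  have st: "card {F \<in> LL {2..n}. card F = i} =
     (i+1) * card {G \<in> LL A. card G = i} + (i + card A) * card {G \<in> LL A. card G + 1 = i}"
    using card_step[OF fin nA A2, of i] unfolding ins .
  have g1: "gg n i = card {F \<in> LL {2..n}. card F = i}" by (simp add: gg_def)
  have g2: "\<And>j. gg (n-1) j = card {G \<in> LL A. card G = j}" by (simp add: gg_def A_def)
  show ?thesis
  proof (cases "i = 0")
    case True
    then have E: "card {G \<in> LL A. card G + 1 = i} = 0" by simp
    have "gg n i = (i+1) * gg (n-1) i + (i + card A) * 0" by (simp only: g1 g2 st E)
    then show ?thesis using True by simp
  next
    case False
    then have E2: "{G \<in> LL A. card G + 1 = i} = {G \<in> LL A. card G = i - 1}" by auto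
    have "gg n i = (i+1) * gg (n-1) i + (i + card A) * gg (n-1) (i-1)" by (simp only: g1 g2 st E2)
    moreover have "i + card A = (n-4)+2+i" using cA n4 by simp
    ultimately have "gg n i = (i+1) * gg (n-1) i + ((n-4)+2+i) * gg (n-1) (i-1)" by simp
    then have "int (gg n i) = int ((i+1) * gg (n-1) i + ((n-4)+2+i) * gg (n-1) (i-1))" by simp
    then show ?thesis using False by (simp only: of_nat_add of_nat_mult) simp
  qed
qed

lemma gg_vanish: assumes "n \<ge> 3" "i > n - 3" shows "gg n i = 0"
  using assms
proof (induction n arbitrary: i rule: nat_induct_at_least)
  case base
  have "VV {2..(3::nat)} = {}"
  proof (rule equals0I)
    fix S assume "S \<in> VV {2..(3::nat)}"
    then have S: "S \<subseteq> {2..3}" "S \<noteq> {2..3}" "2 \<le> card S" unfolding VV_def by auto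
    then have "S \<subset> {2..3}" by blast
    then have "card S < card {2..(3::nat)}" by (rule psubset_card_mono[rotated]) simp
    then show False using S(3) by simp
  qed
  then have "LL {2..(3::nat)} = {{}}" unfolding LL_def lam_def by auto
  then show ?case using base unfolding gg_def by auto
next
  case (Suc m)
  have r: "int (gg (Suc m) i) = int (i+1) * int (gg m i) + (if i = 0 then 0 else int ((Suc m-4)+2+i) * int (gg m (i-1)))"
    using gg_rec[of "Suc m" i] Suc.hyps by simp
  have "gg m i = 0" using Suc.IH Suc.prems by auto
  moreover have "gg m (i-1) = 0" if "i \<noteq> 0"
  proof -
    have "m - 3 < i - 1" using Suc.prems Suc.hyps that by linarith
    then show ?thesis using Suc.IH by blast
  qed
  ultimately show ?case using r by (cases "i = 0") auto
qed

lemma int_interval_img: "{0..int K} = int ` {..K}"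
proof
  show "{0..int K} \<subseteq> int ` {..K}"
  proof
    fix x assume "x \<in> {0..int K}"
    then show "x \<in> int ` {..K}" by (intro image_eqI[where x="nat x"]) auto
  qed
qed auto

lemma wh_h_Hs:
  assumes n3: "n \<ge> 3" and K: "K \<le> n - 3"
  shows "wh_h n (int K) = Hs (n-3) (\<lambda>j. int (gg n j)) K"
proof -
  have cond: "0 \<le> int K \<and> int K \<le> int n - 3" using n3 K by auto
  have "wh_h n (int K) = (\<Sum>i\<in>int ` {..K}. (-1) ^ nat (int K - i) * int ((nat (int n - 3 - i)) choose (nat (int K - i)))
                   * wh_f n (i - 1))"
    unfolding wh_h_def using cond int_interval_img by simp
  also have "\<dots> = (\<Sum>j\<le>K. (-1) ^ nat (int K - int j) * int ((nat (int n - 3 - int j)) choose (nat (int K - int j)))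
                   * wh_f n (int j - 1))"
    by (rule sum.reindex_cong[where l=int]) auto
  also have "\<dots> = Hs (n-3) (\<lambda>j. int (gg n j)) K"
    unfolding Hs_def
  proof (rule sum.cong[OF refl])
    fix j assume "j \<in> {..K}"
    have "nat (int K - int j) = K - j" by simp
    moreover have "nat (int n - 3 - int j) = n - 3 - j" by simp
    moreover have "wh_f n (int j - 1) = int (gg n j)" using wh_f_gg n3 by simp
    ultimately show "(-1) ^ nat (int K - int j) * int ((nat (int n - 3 - int j)) choose (nat (int K - int j)))
                   * wh_f n (int j - 1) = (-1)^(K-j) * int ((n-3-j) choose (K-j)) * int (gg n j)" by simp
  qed
  finally show ?thesis .
qed

lemma wh_h_prev:
  assumes n4: "n \<ge> 4" and K: "K \<le> n - 3"
  shows "wh_h (n-1) (int K) = Hs (n-4) (\<lambda>j. int (gg (n-1) j)) K"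
proof (cases "K \<le> n - 4")
  case True
  then show ?thesis using wh_h_Hs[of "n-1" K] n4 by (simp add: numeral_eq_Suc)
next
  case False
  then have KK: "K = n - 3" using K by simp
  have "wh_h (n-1) (int K) = 0" unfolding wh_h_def using KK n4 by auto
  moreover have "Hs (n-4) (\<lambda>j. int (gg (n-1) j)) K = 0"
    unfolding Hs_def
  proof (rule sum.neutral, rule ballI)
    fix j assume "j \<in> {..K}"
    then have "j \<le> K" by simp
    show "(-1)^(K-j) * int ((n-4-j) choose (K-j)) * int (gg (n-1) j) = 0"
    proof (cases "j = K")
      case True
      then have "gg (n-1) j = 0" using gg_vanish[of "n-1" j] KK n4 by simp
      then show ?thesis by simp
    next
      case False
      then have "n-4-j < K-j" using \<open>j \<le> K\<close> KK n4 by simp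
      then show ?thesis by (simp add: binomial_eq_0)
    qed
  qed
  ultimately show ?thesis by simp
qed

theorem mainTheorem7:
  fixes n :: nat and k :: int
  assumes "n \<ge> 4" and "0 \<le> k" and "k \<le> int n - 3"
  shows "wh_h n k = (k + 1) * wh_h (n - 1) k + (2 * int n - k - 5) * wh_h (n - 1) (k - 1)"
proof -
  define K where "K = nat k"
  have kK: "k = int K" using assms(2) unfolding K_def by simp
  have Kn: "K \<le> n - 3" using assms(3) unfolding K_def by linarith
  define c where "c j = int (gg (n-1) j)" for j
  define e where "e j = int (gg n j)" for j
  define D where "D = n - 4"
  have nD: "n - 3 = Suc D" "n - 4 = D" using assms(1) unfolding D_def by auto
  have erec: "\<And>j. e j = int (j+1) * c j + (if j = 0 then 0 else int (D+2+j) * c (j-1))"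
    unfolding e_def c_def D_def using gg_rec[OF assms(1)] by simp
  have L: "wh_h n k = Hs (Suc D) e K"
    using wh_h_Hs[of n K] assms(1) Kn unfolding kK e_def nD by simp
  have R1: "wh_h (n-1) k = Hs D c K"
    using wh_h_prev[OF assms(1) Kn] unfolding kK c_def nD by simp
  show ?thesis
  proof (cases K)
    case 0
    have "wh_h (n-1) (k-1) = 0" unfolding wh_h_def using 0 kK by simp
    moreover have "Hs (Suc D) e 0 = e 0" unfolding Hs_def by simp
    moreover have "Hs D c 0 = c 0" unfolding Hs_def by simp
    moreover have "e 0 = c 0" using erec[of 0] by simp
    ultimately show ?thesis using L R1 0 kK by simp
  next
    case (Suc k')
    have kD: "k' \<le> D" using Kn Suc nD by simp
    have R2: "wh_h (n-1) (k-1) = Hs D c k'"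
    proof -
      have "k - 1 = int k'" using kK Suc by simp
      moreover have "k' \<le> n - 3" using Kn Suc by simp
      ultimately show ?thesis using wh_h_prev[OF assms(1), of k'] unfolding c_def nD by simp
    qed
    have H: "Hs (Suc D) e (Suc k') = int (k'+2) * Hs D c (Suc k') + int (2*D+2-k') * Hs D c k'"
      by (rule Hs_rec[OF kD erec])
    have c1: "k + 1 = int (k'+2)" using kK Suc by simp
    have c2: "2 * int n - k - 5 = int (2*D+2-k')" using kK Suc kD assms(1) unfolding D_def by simp
    show ?thesis unfolding L R1 R2 c1 c2 using H Suc by simp
  qed
qed

end
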